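(* The inequality $$\sup_{s\in\Omega_1}\big\{|F(s,\psi)|+|G(s,\psi)|\big\}<\mathcal{L}^3\log\mathcal{L}$$ holds for all but at most $O\big((\log\mathcal{L})^{-2}Q^2\big)$ characters $\psi\in\Psi$.
   Context: $\chi$ is a real primitive Dirichlet character of modulus $D$, where $D$ exceeds a sufficiently large absolute constant; implied constants are absolute. $\mathcal{L}=\log D$, $Q=\exp(\mathcal{L}^2)$, $\alpha=\mathcal{L}^{-2}$, $s_0=\tfrac12+iD$, $\Omega_1=\{s:-2\alpha^{1/2}<\mathrm{Re}(s-s_0)<1,\ |\mathrm{Im}(s-s_0)|<1+20\mathcal{L}\}$. Define $\nu,\upsilon$ by $\sum\nu(n)n^{-s}=\zeta(s)L(s,\chi)$, $\sum\upsilon(n)n^{-s}=\zeta(s)^{-1}L(s,\chi)^{-1}$, and $F(s,\psi)=\sum_{n\le D^5}\nu(n)\psi(n)n^{-s}$, $G(s,\psi)=\sum_{n\le D^5}\upsilon(n)\psi(n)n^{-s}$. Let $\mathcal{Q}$ be the set of integers $q$ with $Q<q<2Q$, $\gcd(q,6)=1$, $q$ squarefree; $\Psi_q$ the set of primitive characters $\psi\bmod q$ with $\psi\chi$ primitive modulo $\mathrm{lcm}(q,D)$; $\Psi=\bigcup_{q\in\mathcal{Q}}\Psi_q$. *)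

theory Defs
  imports "HOL-Analysis.Analysis" "HOL-Computational_Algebra.Squarefree"
    "HOL-Number_Theory.Cong"
begin

definition dirichlet_char :: "nat \<Rightarrow> (nat \<Rightarrow> complex) \<Rightarrow> bool" where
  "dirichlet_char q chi \<longleftrightarrow> q \<ge> 1 \<and>
     (\<forall>m n. chi (m * n) = chi m * chi n) \<and>
     (\<forall>n. chi (n + q) = chi n) \<and>
     (\<forall>n. chi n = 0 \<longleftrightarrow> \<not> coprime n q)"

text \<open>Primitive: not induced by any character of a smaller modulus d dividing q,
  i.e. for every proper divisor d of q, chi is not identically 1 on the reduced
  residues that are congruent to 1 modulo d.\<close>
definition primitive_char :: "nat \<Rightarrow> (nat \<Rightarrow> complex) \<Rightarrow> bool" where
  "primitive_char q chi \<longleftrightarrow> dirichlet_char q chi \<and>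
     (\<forall>d. d dvd q \<and> d < q \<longrightarrow>
        (\<exists>a. coprime a q \<and> [a = 1] (mod d) \<and> chi a \<noteq> 1))"

definition real_char :: "(nat \<Rightarrow> complex) \<Rightarrow> bool" where
  "real_char chi \<longleftrightarrow> (\<forall>n. chi n \<in> \<real>)"

definition mu :: "nat \<Rightarrow> int" where
  "mu n = (if n = 0 \<or> \<not> squarefree n then 0 else (-1) ^ card (prime_factors n))"

text \<open>nu: coefficients of zeta(s) L(s,chi), i.e. the Dirichlet convolution 1 * chi.\<close>
definition nu :: "(nat \<Rightarrow> complex) \<Rightarrow> nat \<Rightarrow> complex" where
  "nu chi n = (\<Sum>d | d dvd n \<and> d > 0. chi d)"

text \<open>upsilon: coefficients of zeta(s)^(-1) L(s,chi)^(-1), i.e. the Dirichlet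
  convolution mu * (mu chi).\<close>
definition upsilon :: "(nat \<Rightarrow> complex) \<Rightarrow> nat \<Rightarrow> complex" where
  "upsilon chi n = (\<Sum>d | d dvd n \<and> d > 0. of_int (mu (n div d)) * of_int (mu d) * chi d)"

definition Fsum :: "nat \<Rightarrow> (nat \<Rightarrow> complex) \<Rightarrow> complex \<Rightarrow> (nat \<Rightarrow> complex) \<Rightarrow> complex" where
  "Fsum D chi s psi = (\<Sum>n=1..D^5. nu chi n * psi n * (of_nat n) powr (-s))"

definition Gsum :: "nat \<Rightarrow> (nat \<Rightarrow> complex) \<Rightarrow> complex \<Rightarrow> (nat \<Rightarrow> complex) \<Rightarrow> complex" where
  "Gsum D chi s psi = (\<Sum>n=1..D^5. upsilon chi n * psi n * (of_nat n) powr (-s))"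

definition LL :: "nat \<Rightarrow> real" where "LL D = ln (real D)"
definition QQ :: "nat \<Rightarrow> real" where "QQ D = exp (LL D ^ 2)"
definition alpha :: "nat \<Rightarrow> real" where "alpha D = 1 / LL D ^ 2"
definition s0 :: "nat \<Rightarrow> complex" where "s0 D = Complex (1/2) (real D)"

definition Omega1 :: "nat \<Rightarrow> complex set" where
  "Omega1 D = {s. - 2 * sqrt (alpha D) < Re (s - s0 D) \<and> Re (s - s0 D) < 1 \<and>
                  \<bar>Im (s - s0 D)\<bar> < 1 + 20 * LL D}"

definition QSet :: "nat \<Rightarrow> nat set" where
  "QSet D = {q. QQ D < real q \<and> real q < 2 * QQ D \<and> coprime q 6 \<and> squarefree q}"

definition PsiSet :: "nat \<Rightarrow> (nat \<Rightarrow> complex) \<Rightarrow> (nat \<Rightarrow> complex) set" where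
  "PsiSet D chi = (\<Union>q\<in>QSet D. {psi. primitive_char q psi \<and>
                   primitive_char (lcm q D) (\<lambda>n. psi n * chi n)})"

end

theory Submission
  imports Defs "HOL-Number_Theory.Number_Theory"
begin

lemma dc_period: assumes "dirichlet_char q psi" shows "psi (n + k*q) = psi n"
proof (induction k)
  case (Suc k)
  have "psi (n + Suc k * q) = psi ((n + k*q) + q)" by (rule arg_cong[where f=psi]) simp
  also have "\<dots> = psi (n + k*q)" using assms unfolding dirichlet_char_def by blast
  finally show ?case using Suc by simp
qed simp

lemma dc_mod: assumes "dirichlet_char q psi" shows "psi n = psi (n mod q)"
  using dc_period[OF assms, of "n mod q" "n div q"] by simp

lemma dc_cong: assumes "dirichlet_char q psi" "[a = b] (mod q)" shows "psi a = psi b"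
  using dc_mod[OF assms(1), of a] dc_mod[OF assms(1), of b] assms(2) unfolding cong_def by simp

lemma dc_one: assumes "dirichlet_char q psi" shows "psi 1 = 1"
proof -
  have "psi (1*1) = psi 1 * psi 1" using assms unfolding dirichlet_char_def by blast
  then have "psi 1 = psi 1 * psi 1" by simp
  moreover have "psi 1 \<noteq> 0" using assms unfolding dirichlet_char_def by simp
  ultimately show ?thesis by (metis mult_cancel_left mult.right_neutral)
qed

lemma dc_pow: assumes "dirichlet_char q psi" shows "psi (a^k) = psi a ^ k"
  by (induction k) (use assms dc_one in \<open>auto simp: dirichlet_char_def\<close>)

lemma dc_root: assumes "dirichlet_char q psi" "coprime a q" shows "psi a ^ totient q = 1"
  using dc_pow[OF assms(1)] dc_cong[OF assms(1) euler_theorem[OF assms(2)]] dc_one[OF assms(1)]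
  by simp

lemma dc_norm1: assumes "dirichlet_char q psi" "coprime a q" shows "cmod (psi a) = 1"
proof -
  have "cmod (psi a ^ totient q) = 1" using dc_root[OF assms] by simp
  then have "cmod (psi a) ^ totient q = 1" by (simp add: norm_power)
  moreover have "totient q > 0" using assms(1) unfolding dirichlet_char_def by simp
  ultimately show ?thesis using power_eq_1_iff[of "cmod (psi a)" "totient q"] by simp
qed

lemma dc_zero: assumes "dirichlet_char q psi" "\<not> coprime a q" shows "psi a = 0"
  using assms unfolding dirichlet_char_def by simp

lemma dc_le1: assumes "dirichlet_char q psi" shows "cmod (psi a) \<le> 1"
  using dc_norm1[OF assms] dc_zero[OF assms] by (cases "coprime a q") auto

lemma dc_finite: assumes "q \<ge> 1" shows "finite {psi. dirichlet_char q psi}"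
proof -
  let ?U = "insert 0 {z::complex. z ^ totient q = 1}"
  have "totient q > 0" using assms by simp
  then have "1 \<le> totient q" by (simp add: Suc_le_eq)
  then have "finite {z::complex. z ^ totient q = 1}" by (rule finite_roots_unity)
  then have fU: "finite ?U" by simp
  have "finite (PiE {..<q} (\<lambda>_. ?U))" using fU by (simp add: finite_PiE)
  moreover have "inj_on (\<lambda>psi. restrict psi {..<q}) {psi. dirichlet_char q psi}"
  proof (rule inj_onI)
    fix f g assume f: "f \<in> {psi. dirichlet_char q psi}" and g: "g \<in> {psi. dirichlet_char q psi}"
      and eq: "restrict f {..<q} = restrict g {..<q}"
    show "f = g"
    proof
      fix n
      have "n mod q < q" using assms by simp
      then have "f (n mod q) = g (n mod q)" using fun_cong[OF eq, of "n mod q"] by simp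
      then show "f n = g n" using dc_mod[of q f n] dc_mod[of q g n] f g by simp
    qed
  qed
  moreover have "(\<lambda>psi. restrict psi {..<q}) ` {psi. dirichlet_char q psi} \<subseteq> PiE {..<q} (\<lambda>_. ?U)"
  proof
    fix h assume "h \<in> (\<lambda>psi. restrict psi {..<q}) ` {psi. dirichlet_char q psi}"
    then obtain psi where p: "dirichlet_char q psi" and h: "h = restrict psi {..<q}" by auto
    have "psi r \<in> ?U" for r using dc_root[OF p, of r] dc_zero[OF p, of r] by (cases "coprime r q") auto
    then show "h \<in> PiE {..<q} (\<lambda>_. ?U)" using h by auto
  qed
  ultimately show ?thesis using finite_imageD finite_subset by blast
qed

lemma dc_orth:
  assumes f: "dirichlet_char q f" and g: "dirichlet_char q g" and ne: "f \<noteq> g"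
  shows "(\<Sum>r<q. f r * cnj (g r)) = 0"
proof -
  have q: "q \<ge> 1" using f unfolding dirichlet_char_def by simp
  obtain n where n: "f n \<noteq> g n" using ne by blast
  define a where "a = n mod q"
  have fa: "f a \<noteq> g a" using n dc_mod[OF f, of n] dc_mod[OF g, of n] a_def by simp
  have cop: "coprime a q"
  proof (rule ccontr)
    assume "\<not> coprime a q" then show False using fa dc_zero[OF f] dc_zero[OF g] by simp
  qed
  have gn: "cmod (g a) = 1" by (rule dc_norm1[OF g cop])
  have gg: "g a * cnj (g a) = 1"
    using gn by (metis complex_norm_square mult.commute of_real_1 one_power2)
  define lam where "lam = f a * cnj (g a)"
  have lam1: "lam \<noteq> 1"
  proof
    assume "lam = 1"
    have "f a = f a * (g a * cnj (g a))" using gg by simp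
    also have "\<dots> = (f a * cnj (g a)) * g a" by (simp add: algebra_simps)
    also have "\<dots> = g a" using \<open>lam = 1\<close> lam_def by simp
    finally show False using fa by simp
  qed
  define h where "h r = f r * cnj (g r)" for r
  define p where "p r = (a * r) mod q" for r
  have inj: "inj_on p {..<q}"
  proof (rule inj_onI)
    fix x y assume x: "x \<in> {..<q}" and y: "y \<in> {..<q}" and e: "p x = p y"
    then have "[a * x = a * y] (mod q)" unfolding p_def cong_def by simp
    then have "[x = y] (mod q)" using cong_mult_lcancel_nat[OF cop] by simp
    then show "x = y" using x y unfolding cong_def by simp
  qed
  have img: "p ` {..<q} = {..<q}"
    by (rule endo_inj_surj) (use inj q in \<open>auto simp: p_def\<close>)
  have bij: "bij_betw p {..<q} {..<q}" using inj img by (simp add: bij_betw_def)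
  have "(\<Sum>r<q. h (p r)) = (\<Sum>r<q. h r)" by (rule sum.reindex_bij_betw[OF bij])
  moreover have "h (p r) = lam * h r" for r
  proof -
    have "h (p r) = h (a * r)" unfolding h_def p_def using dc_mod[OF f, of "a*r"] dc_mod[OF g, of "a*r"] by simp
    also have "\<dots> = lam * h r" unfolding h_def lam_def using f g unfolding dirichlet_char_def by simp
    finally show ?thesis .
  qed
  ultimately have "lam * (\<Sum>r<q. h r) = (\<Sum>r<q. h r)" by (simp add: sum_distrib_left)
  then have "(lam - 1) * (\<Sum>r<q. h r) = 0" by (simp add: algebra_simps)
  then show ?thesis using lam1 unfolding h_def by simp
qed

lemma mcnj: "z * cnj z = of_real (cmod z ^ 2)"
  by (simp only: complex_norm_square)

lemma bessel:
  fixes v :: "'a \<Rightarrow> 'b \<Rightarrow> complex" and A :: "'b \<Rightarrow> complex"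
  assumes fS: "finite S" and fR: "finite R"
    and orth: "\<And>x y. x \<in> S \<Longrightarrow> y \<in> S \<Longrightarrow> x \<noteq> y \<Longrightarrow> (\<Sum>r\<in>R. v x r * cnj (v y r)) = 0"
    and nrm: "\<And>x. x \<in> S \<Longrightarrow> (\<Sum>r\<in>R. v x r * cnj (v x r)) = of_real c"
    and c: "c > 0"
  shows "(\<Sum>x\<in>S. (cmod (\<Sum>r\<in>R. A r * cnj (v x r)))\<^sup>2) \<le> c * (\<Sum>r\<in>R. (cmod (A r))\<^sup>2)"
proof -
  define b where "b x = (\<Sum>r\<in>R. A r * cnj (v x r))" for x
  define w where "w r = (\<Sum>x\<in>S. (b x / of_real c) * v x r)" for r
  define P where "P = (\<Sum>x\<in>S. b x * cnj (b x))"
  have P: "P = of_real (\<Sum>x\<in>S. (cmod (b x))\<^sup>2)"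
    unfolding P_def by (simp only: mcnj of_real_sum)
  have cw: "cnj (w r) = (\<Sum>x\<in>S. (cnj (b x) / of_real c) * cnj (v x r))" for r
    unfolding w_def by simp
  have e1: "(\<Sum>r\<in>R. A r * cnj (w r)) = P / of_real c"
  proof -
    have "(\<Sum>r\<in>R. A r * cnj (w r)) = (\<Sum>r\<in>R. \<Sum>x\<in>S. (cnj (b x) / of_real c) * (A r * cnj (v x r)))"
      unfolding cw by (simp add: sum_distrib_left algebra_simps)
    also have "\<dots> = (\<Sum>x\<in>S. (cnj (b x) / of_real c) * b x)"
      by (subst sum.swap) (simp add: b_def sum_distrib_left)
    also have "\<dots> = P / of_real c" unfolding P_def by (simp add: sum_divide_distrib algebra_simps)
    finally show ?thesis .
  qed
  have e2: "(\<Sum>r\<in>R. w r * cnj (w r)) = P / of_real c"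
  proof -
    have "(\<Sum>r\<in>R. w r * cnj (w r)) =
        (\<Sum>r\<in>R. \<Sum>x\<in>S. \<Sum>y\<in>S. (b x / of_real c) * (cnj (b y) / of_real c) * (v x r * cnj (v y r)))"
      unfolding cw unfolding w_def
      apply (simp add: sum_distrib_left sum_distrib_right algebra_simps)
      by (rule sum.cong[OF refl]) (rule sum.swap)
    also have "\<dots> = (\<Sum>x\<in>S. \<Sum>y\<in>S. (b x / of_real c) * (cnj (b y) / of_real c) * (\<Sum>r\<in>R. v x r * cnj (v y r)))"
      by (simp add: sum_distrib_left sum.swap[of _ R])
    also have "\<dots> = (\<Sum>x\<in>S. (b x / of_real c) * (cnj (b x) / of_real c) * of_real c)"
    proof (rule sum.cong[OF refl])
      fix x assume x: "x \<in> S"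
      have "(\<Sum>y\<in>S. (b x / of_real c) * (cnj (b y) / of_real c) * (\<Sum>r\<in>R. v x r * cnj (v y r))) =
            (\<Sum>y\<in>S. if y = x then (b x / of_real c) * (cnj (b x) / of_real c) * of_real c else 0)"
        by (rule sum.cong[OF refl]) (use x orth nrm in auto)
      also have "\<dots> = (b x / of_real c) * (cnj (b x) / of_real c) * of_real c" using x fS by simp
      finally show "(\<Sum>y\<in>S. (b x / of_real c) * (cnj (b y) / of_real c) * (\<Sum>r\<in>R. v x r * cnj (v y r))) =
            (b x / of_real c) * (cnj (b x) / of_real c) * of_real c" .
    qed
    also have "\<dots> = P / of_real c" unfolding P_def using c by (simp add: sum_divide_distrib field_simps)
    finally show ?thesis .
  qed
  have e3: "(\<Sum>r\<in>R. w r * cnj (A r)) = P / of_real c"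
  proof -
    have "(\<Sum>r\<in>R. w r * cnj (A r)) = cnj (\<Sum>r\<in>R. A r * cnj (w r))" by (simp add: mult.commute)
    also have "\<dots> = P / of_real c" unfolding e1 P by simp
    finally show ?thesis .
  qed
  have "(\<Sum>r\<in>R. (A r - w r) * cnj (A r - w r)) =
      (\<Sum>r\<in>R. A r * cnj (A r)) - (\<Sum>r\<in>R. A r * cnj (w r)) - (\<Sum>r\<in>R. w r * cnj (A r)) + (\<Sum>r\<in>R. w r * cnj (w r))"
    by (simp add: algebra_simps sum.distrib sum_subtractf)
  also have "\<dots> = of_real (\<Sum>r\<in>R. (cmod (A r))\<^sup>2) - P / of_real c"
    unfolding e1 e2 e3 by (simp only: mcnj of_real_sum) simp
  finally have "of_real (\<Sum>r\<in>R. (cmod (A r - w r))\<^sup>2) = of_real (\<Sum>r\<in>R. (cmod (A r))\<^sup>2) - P / of_real c"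
    by (simp only: mcnj of_real_sum)
  then have "(\<Sum>r\<in>R. (cmod (A r - w r))\<^sup>2) = (\<Sum>r\<in>R. (cmod (A r))\<^sup>2) - (\<Sum>x\<in>S. (cmod (b x))\<^sup>2) / c"
  proof -
    assume h: "of_real (\<Sum>r\<in>R. (cmod (A r - w r))\<^sup>2) = of_real (\<Sum>r\<in>R. (cmod (A r))\<^sup>2) - P / of_real c"
    have "(of_real (\<Sum>r\<in>R. (cmod (A r))\<^sup>2) - P / of_real c :: complex) =
          of_real ((\<Sum>r\<in>R. (cmod (A r))\<^sup>2) - (\<Sum>x\<in>S. (cmod (b x))\<^sup>2) / c)"
      unfolding P by (simp only: of_real_diff of_real_divide)
    then show ?thesis using h of_real_eq_iff by metis
  qed
  moreover have "(\<Sum>r\<in>R. (cmod (A r - w r))\<^sup>2) \<ge> 0" by (simp add: sum_nonneg)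
  ultimately have "(\<Sum>x\<in>S. (cmod (b x))\<^sup>2) / c \<le> (\<Sum>r\<in>R. (cmod (A r))\<^sup>2)" by linarith
  then show ?thesis using c unfolding b_def by (simp add: field_simps)
qed

lemma cs_card:
  fixes a :: "'a \<Rightarrow> complex"
  shows "(cmod (\<Sum>n\<in>B. a n))\<^sup>2 \<le> real (card B) * (\<Sum>n\<in>B. (cmod (a n))\<^sup>2)"
proof -
  have "cmod (\<Sum>n\<in>B. a n) \<le> (\<Sum>n\<in>B. 1 * cmod (a n))" by (simp add: norm_sum)
  then have "(cmod (\<Sum>n\<in>B. a n))\<^sup>2 \<le> (\<Sum>n\<in>B. 1 * cmod (a n))\<^sup>2" by (simp add: power_mono)
  also have "\<dots> \<le> (\<Sum>n\<in>B. 1\<^sup>2) * (\<Sum>n\<in>B. (cmod (a n))\<^sup>2)" by (rule Cauchy_Schwarz_ineq_sum)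
  finally show ?thesis by simp
qed

lemma card_class: assumes "q \<ge> 1"
  shows "card {n \<in> {1..N}. n mod q = r} \<le> N div q + 1"
proof -
  have "inj_on (\<lambda>n. n div q) {n \<in> {1..N}. n mod q = r}"
  proof (rule inj_onI)
    fix x y assume "x \<in> {n \<in> {1..N}. n mod q = r}" "y \<in> {n \<in> {1..N}. n mod q = r}" "x div q = y div q"
    then show "x = y" by (metis (mono_tags, lifting) div_mod_decomp mem_Collect_eq)
  qed
  moreover have "(\<lambda>n. n div q) ` {n \<in> {1..N}. n mod q = r} \<subseteq> {0..N div q}"
    by (auto intro: div_le_mono)
  ultimately have "card {n \<in> {1..N}. n mod q = r} \<le> card {0..N div q}"
    by (metis card_image card_mono finite_atLeastAtMost)
  then show ?thesis by simp
qed

lemma ls_q: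
  fixes a :: "nat \<Rightarrow> complex"
  assumes q: "q \<ge> 1" and S: "S \<subseteq> {psi. dirichlet_char q psi}"
  shows "(\<Sum>psi\<in>S. (cmod (\<Sum>n=1..N. a n * psi n))\<^sup>2) \<le> real (N + q) * (\<Sum>n=1..N. (cmod (a n))\<^sup>2)"
proof -
  have fS: "finite S" using dc_finite[OF q] S finite_subset by blast
  define B where "B r = {n \<in> {1..N}. n mod q = r}" for r
  define A where "A r = (\<Sum>n\<in>B r. a n)" for r
  define c where "c = real (card {r\<in>{..<q}. coprime r q})"
  have split: "(\<Sum>n=1..N. f n) = (\<Sum>r<q. \<Sum>n\<in>B r. f n)" for f :: "nat \<Rightarrow> 'b::comm_monoid_add"
    unfolding B_def using q by (intro sum.group[symmetric]) auto
  have i: "(\<Sum>n=1..N. a n * psi n) = (\<Sum>r<q. A r * cnj (cnj (psi r)))" if p: "psi \<in> S" for psi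
  proof -
    have dp: "dirichlet_char q psi" using p S by auto
    have "(\<Sum>n=1..N. a n * psi n) = (\<Sum>r<q. \<Sum>n\<in>B r. a n * psi n)" by (rule split)
    also have "\<dots> = (\<Sum>r<q. \<Sum>n\<in>B r. a n * psi r)"
      by (intro sum.cong refl) (use dc_mod[OF dp] in \<open>auto simp: B_def\<close>)
    also have "\<dots> = (\<Sum>r<q. A r * cnj (cnj (psi r)))" by (simp add: A_def sum_distrib_right)
    finally show ?thesis .
  qed
  have nrm1: "(\<Sum>r<q. cnj (psi r) * cnj (cnj (psi r))) = of_real c" if p: "psi \<in> S" for psi
  proof -
    have dp: "dirichlet_char q psi" using p S by auto
    have "(\<Sum>r<q. cnj (psi r) * cnj (cnj (psi r))) = (\<Sum>r<q. psi r * cnj (psi r))" by (simp add: mult.commute)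
    also have "\<dots> = (\<Sum>r<q. of_real (if coprime r q then 1 else 0))"
      by (intro sum.cong refl) (use dc_norm1[OF dp] dc_zero[OF dp] in \<open>auto simp: mcnj\<close>)
    also have "\<dots> = of_real (\<Sum>r<q. (if coprime r q then 1 else 0))" by (simp only: of_real_sum)
    also have "(\<Sum>r<q. (if coprime r q then 1 else 0)) = (\<Sum>r\<in>{r\<in>{..<q}. coprime r q}. (1::real))"
      by (simp only: sum.inter_filter[OF finite_lessThan])
    also have "\<dots> = c" unfolding c_def by simp
    finally show ?thesis .
  qed
  have c0: "c > 0"
  proof -
    have "(if q = 1 then 0 else 1) \<in> {r\<in>{..<q}. coprime r q}" using q by auto
    then have "{r\<in>{..<q}. coprime r q} \<noteq> {}" by blast
    then show ?thesis unfolding c_def by (simp add: card_gt_0_iff)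
  qed
  have cq: "c \<le> real q"
  proof -
    have "card {r\<in>{..<q}. coprime r q} \<le> card {..<q}" by (rule card_mono) auto
    then show ?thesis unfolding c_def by simp
  qed
  have "(\<Sum>psi\<in>S. (cmod (\<Sum>n=1..N. a n * psi n))\<^sup>2) = (\<Sum>psi\<in>S. (cmod (\<Sum>r<q. A r * cnj (cnj (psi r))))\<^sup>2)"
    using i by simp
  also have "\<dots> \<le> c * (\<Sum>r<q. (cmod (A r))\<^sup>2)"
  proof (rule bessel[OF fS finite_lessThan _ nrm1 c0])
    fix x y assume x: "x \<in> S" and y: "y \<in> S" and xy: "x \<noteq> y"
    have "(\<Sum>r<q. cnj (x r) * cnj (cnj (y r))) = cnj (\<Sum>r<q. x r * cnj (y r))" by (simp add: ac_simps)
    also have "(\<Sum>r<q. x r * cnj (y r)) = 0" by (rule dc_orth) (use x y xy S in auto)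
    finally show "(\<Sum>r<q. cnj (x r) * cnj (cnj (y r))) = 0" by simp
  qed
  also have "\<dots> \<le> real q * (real (N div q + 1) * (\<Sum>n=1..N. (cmod (a n))\<^sup>2))"
  proof (rule mult_mono[OF cq _ _ sum_nonneg])
    have "(\<Sum>r<q. (cmod (A r))\<^sup>2) \<le> (\<Sum>r<q. real (N div q + 1) * (\<Sum>n\<in>B r. (cmod (a n))\<^sup>2))"
    proof (rule sum_mono)
      fix r
      have "(cmod (A r))\<^sup>2 \<le> real (card (B r)) * (\<Sum>n\<in>B r. (cmod (a n))\<^sup>2)" unfolding A_def by (rule cs_card)
      also have "\<dots> \<le> real (N div q + 1) * (\<Sum>n\<in>B r. (cmod (a n))\<^sup>2)"
      proof (rule mult_right_mono)
        have "card (B r) \<le> N div q + 1" unfolding B_def by (rule card_class[OF q])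
        then show "real (card (B r)) \<le> real (N div q + 1)" by linarith
      qed (simp add: sum_nonneg)
      finally show "(cmod (A r))\<^sup>2 \<le> real (N div q + 1) * (\<Sum>n\<in>B r. (cmod (a n))\<^sup>2)" .
    qed
    also have "\<dots> = real (N div q + 1) * (\<Sum>n=1..N. (cmod (a n))\<^sup>2)"
      by (simp add: split[symmetric] sum_distrib_left)
    finally show "(\<Sum>r<q. (cmod (A r))\<^sup>2) \<le> real (N div q + 1) * (\<Sum>n=1..N. (cmod (a n))\<^sup>2)" .
  qed auto
  also have "\<dots> \<le> real (N + q) * (\<Sum>n=1..N. (cmod (a n))\<^sup>2)"
  proof -
    have "q * (N div q) \<le> N" by (simp add: mult.commute)
    then have "real q * real (N div q + 1) \<le> real (N + q)"
      by (metis add.commute add_le_cancel_left distrib_left mult.right_neutral of_nat_add of_nat_le_iff of_nat_mult)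
    then show ?thesis by (simp add: mult.assoc[symmetric] mult_right_mono sum_nonneg)
  qed
  finally show ?thesis .
qed

definition dd :: "nat \<Rightarrow> nat" where "dd n = card {d. d dvd n \<and> d > 0}"

lemma nu_bound: assumes "dirichlet_char q chi" shows "cmod (nu chi n) \<le> real (dd n)"
proof -
  have "cmod (nu chi n) \<le> (\<Sum>d | d dvd n \<and> d > 0. cmod (chi d))" unfolding nu_def by (rule norm_sum)
  also have "\<dots> \<le> (\<Sum>d | d dvd n \<and> d > 0. 1)" by (rule sum_mono) (rule dc_le1[OF assms])
  finally show ?thesis unfolding dd_def by simp
qed

lemma mu_le1: "\<bar>mu n\<bar> \<le> 1" unfolding mu_def by (simp add: power_abs)

lemma upsilon_bound: assumes "dirichlet_char q chi" shows "cmod (upsilon chi n) \<le> real (dd n)"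
proof -
  have "cmod (upsilon chi n) \<le> (\<Sum>d | d dvd n \<and> d > 0. cmod (of_int (mu (n div d)) * of_int (mu d) * chi d))"
    unfolding upsilon_def by (rule norm_sum)
  also have "\<dots> \<le> (\<Sum>d | d dvd n \<and> d > 0. 1)"
  proof (rule sum_mono)
    fix d
    have "cmod (of_int (mu (n div d)) * of_int (mu d) * chi d) = \<bar>real_of_int (mu (n div d))\<bar> * \<bar>real_of_int (mu d)\<bar> * cmod (chi d)"
      by (simp add: norm_mult)
    also have "\<dots> \<le> 1 * 1 * 1"
      by (intro mult_mono) (use mu_le1[of "n div d"] mu_le1[of d] dc_le1[OF assms, of d] in auto)
    finally show "cmod (of_int (mu (n div d)) * of_int (mu d) * chi d) \<le> 1" by simp
  qed
  finally show ?thesis unfolding dd_def by simp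
qed

lemma dd_sq: "n > 0 \<Longrightarrow> dd n ^ 2 = card ({d. d dvd n \<and> d > 0} \<times> {d. d dvd n \<and> d > 0})"
  unfolding dd_def by (simp add: card_cartesian_product power2_eq_square)

lemma fin_div: "n > 0 \<Longrightarrow> finite {d::nat. d dvd n \<and> d > 0}"
  by (rule finite_subset[of _ "{..n}"]) (auto dest: dvd_imp_le)

lemma prod_id:
  fixes n b c :: nat
  assumes "n > 0" "b dvd n" "c dvd n"
  shows "gcd b c * (b div gcd b c) * (c div gcd b c) * (n div lcm b c) = n"
proof -
  have "gcd b c * (b div gcd b c) = b" by simp
  moreover have "b * (c div gcd b c) = lcm b c" by (simp add: lcm_nat_def div_mult_swap)
  moreover have "lcm b c * (n div lcm b c) = n" using assms by (simp add: lcm_least)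
  ultimately show ?thesis by (metis mult.assoc)
qed

lemma quad_sum:
  fixes f :: "nat \<Rightarrow> real"
  shows "(\<Sum>t\<in>A \<times> (A \<times> (A \<times> A)). f (fst t) * f (fst (snd t)) * f (fst (snd (snd t))) * f (snd (snd (snd t))))
         = (sum f A) ^ 4"
proof -
  have "(sum f A) ^ 4 = (\<Sum>w\<in>A. \<Sum>x\<in>A. \<Sum>y\<in>A. \<Sum>z\<in>A. f w * f x * f y * f z)"
  proof -
    have "(sum f A) ^ 4 = sum f A * (sum f A * (sum f A * sum f A))" by (simp add: power4_eq_xxxx)
    also have "\<dots> = (\<Sum>w\<in>A. f w * (\<Sum>x\<in>A. f x * (\<Sum>y\<in>A. f y * (\<Sum>z\<in>A. f z))))"
      by (simp add: sum_distrib_right)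
    also have "\<dots> = (\<Sum>w\<in>A. \<Sum>x\<in>A. \<Sum>y\<in>A. \<Sum>z\<in>A. f w * f x * f y * f z)"
      by (simp add: sum_distrib_left mult.assoc)
    finally show ?thesis .
  qed
  also have "\<dots> = (\<Sum>t\<in>A \<times> (A \<times> (A \<times> A)). f (fst t) * f (fst (snd t)) * f (fst (snd (snd t))) * f (snd (snd (snd t))))"
    by (simp add: sum.cartesian_product case_prod_beta)
  finally show ?thesis by simp
qed

lemma pow4: "real (w*x*y*z) powr a = real w powr a * real x powr a * real y powr a * real z powr a"
  by (simp only: of_nat_mult powr_mult of_nat_0_le_iff mult_nonneg_nonneg)

lemma M_bound:
  fixes a :: real
  shows "(\<Sum>n=1..N. real (dd n)^2 * real n powr (-a)) \<le> (\<Sum>m=1..N. real m powr (-a)) ^ 4"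
proof -
  define Dv where "Dv n = {d::nat. d dvd n \<and> d > 0}" for n
  define T where "T = Sigma {1..N} (\<lambda>n. Dv n \<times> Dv n)"
  define f where "f m = real m powr (-a)" for m
  define phi where "phi t = (case t of (n, b, c) \<Rightarrow> (gcd b c, b div gcd b c, c div gcd b c, n div lcm b c))" for t :: "nat \<times> nat \<times> nat"
  define h where "h t = f (fst t) * f (fst (snd t)) * f (fst (snd (snd t))) * f (snd (snd (snd t)))" for t :: "nat \<times> nat \<times> nat \<times> nat"
  have fT: "finite T" unfolding T_def Dv_def by (auto intro!: finite_SigmaI finite_cartesian_product fin_div)
  have "(\<Sum>n=1..N. real (dd n)^2 * real n powr (-a)) = (\<Sum>n=1..N. \<Sum>t\<in>Dv n \<times> Dv n. f n)"
  proof (rule sum.cong[OF refl])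
    fix n assume "n \<in> {1..N}"
    then have "n > 0" by simp
    then have "real (dd n)^2 = real (card (Dv n \<times> Dv n))" using dd_sq[of n] unfolding Dv_def by (metis of_nat_power)
    then show "real (dd n)^2 * real n powr (-a) = (\<Sum>t\<in>Dv n \<times> Dv n. f n)"
      by (simp add: f_def)
  qed
  also have "\<dots> = (\<Sum>(n,t)\<in>T. f n)" unfolding T_def
    by (rule sum.Sigma) (auto simp: Dv_def intro!: finite_cartesian_product fin_div)
  also have "\<dots> = (\<Sum>t\<in>T. f (fst t))" by (simp add: case_prod_beta)
  also have "\<dots> = (\<Sum>t\<in>T. h (phi t))"
  proof (rule sum.cong[OF refl])
    fix t assume "t \<in> T"
    then obtain n b c where t: "t = (n, b, c)" and n: "n \<in> {1..N}" and b: "b dvd n" and c: "c dvd n"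
      unfolding T_def Dv_def by auto
    have "f n = f (gcd b c * (b div gcd b c) * (c div gcd b c) * (n div lcm b c))"
      using prod_id[of n b c] n b c by simp
    also have "\<dots> = h (phi t)" unfolding f_def h_def phi_def t
      by (simp only: prod.case fst_conv snd_conv pow4)
    finally show "f (fst t) = h (phi t)" using t by simp
  qed
  also have "\<dots> = (\<Sum>s\<in>phi ` T. h s)"
  proof -
    have "inj_on phi T"
    proof (rule inj_onI)
      fix t1 t2 assume t1: "t1 \<in> T" and t2: "t2 \<in> T" and e: "phi t1 = phi t2"
      obtain n b c where tt1: "t1 = (n, b, c)" and n: "n \<in> {1..N}" and b: "b dvd n" and c: "c dvd n"
        using t1 unfolding T_def Dv_def by auto
      obtain n' b' c' where tt2: "t2 = (n', b', c')" and n': "n' \<in> {1..N}" and b': "b' dvd n'" and c': "c' dvd n'"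
        using t2 unfolding T_def Dv_def by auto
      have e1: "gcd b c = gcd b' c'" "b div gcd b c = b' div gcd b' c'" "c div gcd b c = c' div gcd b' c'"
        "n div lcm b c = n' div lcm b' c'" using e unfolding phi_def tt1 tt2 by auto
      have "b = b'" by (metis e1(1) e1(2) dvd_mult_div_cancel gcd_dvd1)
      moreover have "c = c'" by (metis e1(1) e1(3) dvd_mult_div_cancel gcd_dvd2)
      moreover have "n = n'" using prod_id[of n b c] prod_id[of n' b' c'] n b c n' b' c' e1 by simp
      ultimately show "t1 = t2" using tt1 tt2 by simp
    qed
    then show ?thesis using sum.reindex[of phi T h] by (simp add: comp_def)
  qed
  also have "\<dots> \<le> (\<Sum>s\<in>{1..N} \<times> ({1..N} \<times> ({1..N} \<times> {1..N})). h s)"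
  proof (rule sum_mono2)
    show "phi ` T \<subseteq> {1..N} \<times> ({1..N} \<times> ({1..N} \<times> {1..N}))"
    proof
      fix s assume "s \<in> phi ` T"
      then obtain n b c where s: "s = phi (n, b, c)" and n: "n \<in> {1..N}" and b: "b dvd n" and c: "c dvd n"
        unfolding T_def Dv_def by auto
      have n0: "n > 0" using n by simp
      have bn: "b \<le> n" "c \<le> n" using b c n0 by (auto intro: dvd_imp_le)
      have b0: "b > 0" "c > 0" using b c n0 by (auto intro: Nat.gr0I)
      have l: "lcm b c dvd n" "lcm b c > 0" using b c b0 by (auto simp: lcm_least lcm_pos_nat)
      have "gcd b c \<le> n" using bn b0 gcd_le1_nat[of b c] by linarith
      moreover have "b div gcd b c \<le> n" using bn by (meson div_le_dividend le_trans)
      moreover have "c div gcd b c \<le> n" using bn by (meson div_le_dividend le_trans)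
      moreover have "n div lcm b c \<le> n" by simp
      moreover have "0 < gcd b c" "0 < b div gcd b c" "0 < c div gcd b c" "0 < n div lcm b c"
        using b0 l n0 by (auto simp: div_greater_zero_iff dvd_imp_le)
      moreover have "n div lcm b c \<le> N" using n div_le_dividend[of n "lcm b c"] by (simp del: div_le_dividend)
      moreover have "gcd b c > 0" using b0 by simp
      ultimately show "s \<in> {1..N} \<times> ({1..N} \<times> ({1..N} \<times> {1..N}))"
        using n unfolding s phi_def by (auto simp: Suc_le_eq)
    qed
  qed (auto simp: h_def f_def)
  also have "\<dots> = (\<Sum>m=1..N. real m powr (-a)) ^ 4" unfolding h_def f_def by (rule quad_sum)
  finally show ?thesis .
qed

lemma powr_step:
  fixes x v :: real
  assumes x: "x \<ge> 2" and v: "v > 0"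
  shows "x powr (-(1+v)) \<le> ((x-1) powr (-v) - x powr (-v)) / v"
proof -
  have "ln ((x-1)/x) \<le> (x-1)/x - 1" using x by (intro ln_le_minus_one) simp
  moreover have "ln ((x-1)/x) = ln (x-1) - ln x" using x by (simp add: ln_div)
  moreover have "(x-1)/x - 1 = -1/x" using x by (simp add: field_simps)
  ultimately have l: "ln (x-1) \<le> ln x - 1/x" by simp
  have "(x-1) powr (-v) = exp (-v * ln (x-1))" using x by (simp add: powr_def)
  also have "\<dots> \<ge> exp (-v * ln x + v/x)"
  proof (intro exp_mono)
    have "v * (ln (x-1) + 1/x) \<le> v * ln x" using l v by (intro mult_left_mono) auto
    then have "v * ln (x-1) + v/x \<le> v * ln x" by (simp add: distrib_left)
    then show "-v * ln x + v/x \<le> -v * ln (x-1)" by simp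
  qed
  finally have "(x-1) powr (-v) \<ge> exp (-v * ln x + v/x)" .
  moreover have "exp (-v * ln x + v/x) = exp (-v * ln x) * exp (v/x)" by (rule exp_add)
  ultimately have "(x-1) powr (-v) \<ge> exp (-v * ln x) * exp (v/x)" by simp
  moreover have "exp (v/x) \<ge> 1 + v/x" by (rule exp_ge_add_one_self)
  moreover have "exp (-v * ln x) = x powr (-v)" using x by (simp add: powr_def)
  ultimately have A1: "(x-1) powr (-v) \<ge> x powr (-v) * exp (v/x)" and A2: "exp (v/x) \<ge> 1 + v/x" by simp_all
  have "x powr (-v) * (1 + v/x) \<le> x powr (-v) * exp (v/x)" using A2 by (intro mult_left_mono) auto
  then have "(x-1) powr (-v) \<ge> x powr (-v) * (1 + v/x)" using A1 by linarith
  then have "(x-1) powr (-v) - x powr (-v) \<ge> v * (x powr (-v) / x)" by (simp add: algebra_simps)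
  moreover have "x powr (-(1+v)) = x powr (-v) / x"
  proof -
    have "-(1+v) = -v + -1" by simp
    then have "x powr (-(1+v)) = x powr (-v) * x powr (-1)" by (simp only: powr_add)
    also have "x powr (-1) = 1/x" using x by (simp add: powr_neg_one)
    finally show ?thesis by simp
  qed
  ultimately show ?thesis using v by (simp add: field_simps)
qed

lemma H_pos_aux:
  fixes v :: real assumes v: "v > 0" and N: "N \<ge> 1"
  shows "(\<Sum>m=1..N. real m powr (-(1+v))) \<le> 1 + (1 - real N powr (-v)) / v"
  using N
proof (induction N rule: dec_induct)
  case base then show ?case by simp
next
  case (step N)
  have "(\<Sum>m=1..Suc N. real m powr (-(1+v))) = (\<Sum>m=1..N. real m powr (-(1+v))) + real (Suc N) powr (-(1+v))"
    by simp
  also have "\<dots> \<le> 1 + (1 - real N powr (-v)) / v + (real N powr (-v) - real (Suc N) powr (-v)) / v"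
    using step.IH powr_step[of "real (Suc N)" v] v step.hyps by simp
  also have "\<dots> = 1 + (1 - real (Suc N) powr (-v)) / v" using v by (simp add: field_simps)
  finally show ?case .
qed

lemma H_pos:
  fixes v :: real assumes v: "v > 0"
  shows "(\<Sum>m=1..N. real m powr (-(1+v))) \<le> 1 + 1 / v"
proof (cases "N \<ge> 1")
  case True
  have "(1 - real N powr (-v)) / v \<le> 1 / v" using v by (simp add: divide_right_mono)
  then show ?thesis using H_pos_aux[OF v True] by linarith
next
  case False then show ?thesis using v by simp
qed

lemma H_bound:
  fixes v Lp :: real
  assumes N: "N \<ge> 3" and Lp: "Lp = ln (real N)" and v: "v \<ge> -20/Lp"
  shows "(\<Sum>m=1..N. real m powr (-(1+v))) \<le> exp 21 * (1 + 1 / max v (1/Lp))"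
proof -
  have Lp1: "Lp \<ge> 1"
  proof -
    have "exp 1 \<le> real N" using N exp_le by linarith
    then have "ln (exp 1) \<le> ln (real N)" using N by (subst ln_le_cancel_iff) auto
    then show ?thesis using Lp by simp
  qed
  have e21: "1 \<le> exp (21::real)" by simp
  show ?thesis
  proof (cases "v \<ge> 1/Lp")
    case True
    then have "v > 0" using Lp1 by (smt (verit) divide_pos_pos)
    then have "(\<Sum>m=1..N. real m powr (-(1+v))) \<le> 1 + 1/v" by (rule H_pos)
    also have "\<dots> \<le> exp 21 * (1 + 1/v)"
    proof -
      have "0 \<le> 1 + 1/v" using \<open>v > 0\<close> by simp
      then have "1 * (1 + 1/v) \<le> exp 21 * (1 + 1/v)" by (rule mult_right_mono[OF e21])
      then show ?thesis by simp
    qed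
    finally show ?thesis using True by (simp add: max_def)
  next
    case False
    have "(\<Sum>m=1..N. real m powr (-(1+v))) \<le> (\<Sum>m=1..N. exp 21 * real m powr (-(1+1/Lp)))"
    proof (rule sum_mono)
      fix m assume m: "m \<in> {1..N}"
      have "real m powr (-(1+v)) = real m powr (-(1+1/Lp)) * real m powr (1/Lp - v)"
        by (simp add: powr_add[symmetric])
      also have "\<dots> \<le> real m powr (-(1+1/Lp)) * real N powr (1/Lp - v)"
        using m False by (intro mult_left_mono powr_mono2) auto
      also have "\<dots> \<le> real m powr (-(1+1/Lp)) * exp 21"
      proof (rule mult_left_mono)
        have "real N powr (1/Lp - v) = exp ((1/Lp - v) * Lp)" using N Lp by (simp add: powr_def)
        also have "\<dots> \<le> exp 21"
        proof -
          have "(1/Lp - v) * Lp = 1 - v * Lp" using Lp1 by (simp add: field_simps)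
          also have "\<dots> \<le> 21" using v Lp1 by (simp add: field_simps)
          finally show ?thesis by simp
        qed
        finally show "real N powr (1/Lp - v) \<le> exp 21" .
      qed simp
      finally show "real m powr (-(1+v)) \<le> exp 21 * real m powr (-(1+1/Lp))"
        by (simp add: mult.commute mult_left_mono)
    qed
    also have "\<dots> = exp 21 * (\<Sum>m=1..N. real m powr (-(1+1/Lp)))" by (simp add: sum_distrib_left)
    also have "\<dots> \<le> exp 21 * (1 + 1/(1/Lp))"
      using H_pos[of "1/Lp" N] Lp1 by (intro mult_left_mono) auto
    finally show ?thesis using False by (simp add: max_def)
  qed
qed

lemma inv_sq_sum: "(\<Sum>i<n. 1 / (real i + 1)^2) \<le> 2 - 1 / real (max n 1)"
proof (induction n)
  case 0 then show ?case by simp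
next
  case (Suc n)
  show ?case
  proof (cases "n = 0")
    case True then show ?thesis by simp
  next
    case False
    then have n: "real n \<ge> 1" by simp
    have "(\<Sum>i<Suc n. 1 / (real i + 1)^2) = (\<Sum>i<n. 1 / (real i + 1)^2) + 1 / (real n + 1)^2" by simp
    also have "\<dots> \<le> 2 - 1 / real n + 1 / (real n + 1)^2"
    proof -
      have "max n 1 = n" using False by simp
      then show ?thesis using Suc.IH by simp
    qed
    also have "\<dots> \<le> 2 - 1 / (real n + 1)"
    proof -
      have "real n * (real n + 1) \<le> (real n + 1)^2" by (simp add: power2_eq_square)
      then have "1 / (real n + 1)^2 \<le> 1 / (real n * (real n + 1))"
        using n by (intro divide_left_mono) auto
      also have "\<dots> = 1 / real n - 1 / (real n + 1)" using n by (simp add: field_simps)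
      finally have "1 / (real n + 1)^2 \<le> 1 / real n - 1 / (real n + 1)" .
      then show ?thesis by linarith
    qed
    finally have X: "(\<Sum>i<Suc n. 1 / (real i + 1)^2) \<le> 2 - 1 / (real n + 1)" .
    have "real (max (Suc n) 1) = real n + 1" by simp
    show ?thesis unfolding \<open>real (max (Suc n) 1) = real n + 1\<close> by (rule X)
  qed
qed

lemma four_pow: fixes y :: real assumes "y \<ge> 0" shows "(1 + y)^4 \<le> 16 * (1 + y^4)"
proof (cases "y \<le> 1")
  case True
  have "(1+y)^4 \<le> 2^4" using True assms by (intro power_mono) auto
  moreover have "(2::real)^4 = 16" by simp
  moreover have "16 \<le> 16 * (1 + y^4)" using assms by simp
  ultimately show ?thesis by linarith
next
  case False
  have "(1+y)^4 \<le> (2*y)^4" using False assms by (intro power_mono) auto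
  also have "\<dots> = 16 * y^4" by simp
  finally show ?thesis by simp
qed

lemma cpowr_split:
  fixes s s' :: complex and Lp :: real
  assumes n: "n > 0" and Lp: "Lp > 0"
  shows "(of_nat n :: complex) powr (-s) =
         (of_nat n) powr (-s') * exp ((-(s - s') * of_real Lp) * of_real (ln (real n) / Lp))"
proof -
  have l: "Ln (of_nat n :: complex) = of_real (ln (real n))" using n by simp
  have "(of_nat n :: complex) powr (-s) = exp (-s * of_real (ln (real n)))"
    using n l by (simp add: powr_def)
  also have "-s * of_real (ln (real n)) = -s' * of_real (ln (real n)) + (-(s - s') * of_real Lp) * of_real (ln (real n) / Lp)"
    using Lp by (simp add: field_simps)
  also have "exp \<dots> = exp (-s' * of_real (ln (real n))) * exp ((-(s - s') * of_real Lp) * of_real (ln (real n) / Lp))"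
    by (rule exp_add)
  also have "exp (-s' * of_real (ln (real n))) = (of_nat n) powr (-s')"
    using n l by (simp add: powr_def)
  finally show ?thesis .
qed

lemma einv_summable: "summable (\<lambda>k. 1 / fact k :: real)" and einv_sum: "(\<Sum>k. 1 / fact k :: real) = exp 1"
proof -
  have "(\<lambda>k. (1::real)^k /\<^sub>R fact k) sums exp 1" by (rule exp_converges)
  then have s: "(\<lambda>k. 1 / fact k :: real) sums exp 1" by (simp add: divide_inverse)
  show "summable (\<lambda>k. 1 / fact k :: real)" using s by (rule sums_summable)
  show "(\<Sum>k. 1 / fact k :: real) = exp 1" using s by (rule sums_unique[symmetric])
qed

lemma taylor:
  fixes c :: "nat \<Rightarrow> complex" and s s' :: complex and N :: nat and Lp :: real
  assumes N: "N \<ge> 2" and Lpdef: "Lp = ln (real N)" and close: "cmod (s - s') * Lp \<le> 1"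
  defines "Y \<equiv> \<lambda>k. cmod (\<Sum>n=1..N. c n * of_real ((ln (real n) / Lp)^k) * (of_nat n) powr (-s'))"
  shows "summable (\<lambda>k. Y k ^ 2 / fact k)"
    and "(cmod (\<Sum>n=1..N. c n * (of_nat n) powr (-s)))\<^sup>2 \<le> exp 1 * (\<Sum>k. Y k ^ 2 / fact k)"
proof -
  have Lp: "Lp > 0" using N Lpdef by simp
  define z where "z = -(s - s') * of_real Lp"
  have z1: "cmod z \<le> 1" using close Lp unfolding z_def by (simp add: norm_mult norm_minus_commute)
  define r where "r n = ln (real n) / Lp" for n
  have r01: "0 \<le> r n \<and> r n \<le> 1" if "n \<in> {1..N}" for n
  proof -
    have "ln (real n) \<le> Lp" using that Lpdef by simp
    moreover have "0 \<le> ln (real n)" using that by simp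
    ultimately show ?thesis using Lp unfolding r_def by simp
  qed
  define t where "t k = z^k / fact k * (\<Sum>n=1..N. c n * of_real (r n ^ k) * (of_nat n) powr (-s'))" for k
  have tsum: "t sums (\<Sum>n=1..N. c n * (of_nat n) powr (-s))"
  proof -
    have "(\<lambda>k. \<Sum>n=1..N. (c n * (of_nat n) powr (-s')) * ((z * of_real (r n))^k /\<^sub>R fact k))
           sums (\<Sum>n=1..N. (c n * (of_nat n) powr (-s')) * exp (z * of_real (r n)))"
      by (intro sums_sum sums_mult exp_converges)
    moreover have "(\<lambda>k. \<Sum>n=1..N. (c n * (of_nat n) powr (-s')) * ((z * of_real (r n))^k /\<^sub>R fact k)) = t"
    proof
      fix k
      show "(\<Sum>n=1..N. (c n * (of_nat n) powr (-s')) * ((z * of_real (r n))^k /\<^sub>R fact k)) = t k"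
        unfolding t_def by (simp add: sum_distrib_left scaleR_conv_of_real power_mult_distrib field_simps)
    qed
    moreover have "(\<Sum>n=1..N. (c n * (of_nat n) powr (-s')) * exp (z * of_real (r n))) = (\<Sum>n=1..N. c n * (of_nat n) powr (-s))"
    proof (rule sum.cong[OF refl])
      fix n assume "n \<in> {1..N}"
      then have "n > 0" by simp
      then show "(c n * (of_nat n) powr (-s')) * exp (z * of_real (r n)) = c n * (of_nat n) powr (-s)"
        using cpowr_split[of n Lp s s'] Lp unfolding z_def r_def by simp
    qed
    ultimately show ?thesis by simp
  qed
  define Ym where "Ym = (\<Sum>n=1..N. cmod (c n) * cmod ((of_nat n :: complex) powr (-s')))"
  have Yle: "Y k \<le> Ym" for k
  proof -
    have "Y k \<le> (\<Sum>n=1..N. cmod (c n * of_real ((ln (real n) / Lp)^k) * (of_nat n) powr (-s')))"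
      unfolding Y_def by (rule norm_sum)
    also have "\<dots> \<le> Ym" unfolding Ym_def
    proof (rule sum_mono)
      fix n assume n: "n \<in> {1..N}"
      have "(ln (real n) / Lp)^k \<le> 1" using r01[OF n] unfolding r_def by (intro power_le_one) auto
      moreover have "(ln (real n) / Lp)^k \<ge> 0" using r01[OF n] unfolding r_def by simp
      ultimately have "\<bar>(ln (real n) / Lp)^k\<bar> \<le> 1" by simp
      have "cmod (c n * of_real ((ln (real n) / Lp)^k) * (of_nat n) powr (-s')) =
            cmod (c n) * \<bar>(ln (real n) / Lp)^k\<bar> * cmod ((of_nat n :: complex) powr (-s'))"
        by (simp only: norm_mult norm_of_real)
      also have "\<dots> \<le> cmod (c n) * 1 * cmod ((of_nat n :: complex) powr (-s'))"
        using \<open>\<bar>(ln (real n) / Lp)^k\<bar> \<le> 1\<close> by (intro mult_right_mono mult_left_mono) auto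
      finally show "cmod (c n * of_real ((ln (real n) / Lp)^k) * (of_nat n) powr (-s')) \<le> cmod (c n) * cmod ((of_nat n :: complex) powr (-s'))"
        by simp
    qed
    finally show ?thesis .
  qed
  have Y0: "Y k \<ge> 0" for k unfolding Y_def by simp
  show sumY: "summable (\<lambda>k. Y k ^ 2 / fact k)"
  proof (rule summable_comparison_test'[where N=0])
    show "summable (\<lambda>k. Ym^2 * (1 / fact k))" by (rule summable_mult[OF einv_summable])
    fix k
    have "Y k ^ 2 \<le> Ym ^ 2" using Yle[of k] Y0[of k] by (intro power_mono) auto
    then show "norm (Y k ^ 2 / fact k) \<le> Ym^2 * (1 / fact k)" by (simp add: divide_right_mono)
  qed
  have tle: "cmod (t k) \<le> Y k / fact k" for k
  proof -
    have "cmod (t k) = cmod z ^ k / fact k * Y k" unfolding t_def Y_def r_def by (simp add: norm_mult norm_divide norm_power)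
    also have "\<dots> \<le> 1 / fact k * Y k" using z1 Y0[of k] by (intro mult_right_mono divide_right_mono power_le_one) auto
    finally show ?thesis by simp
  qed
  have part: "(cmod (\<Sum>k<K. t k))\<^sup>2 \<le> exp 1 * (\<Sum>k. Y k ^ 2 / fact k)" for K
  proof -
    have "cmod (\<Sum>k<K. t k) \<le> (\<Sum>k<K. cmod (t k))" by (rule norm_sum)
    also have "\<dots> \<le> (\<Sum>k<K. Y k / fact k)" using tle by (rule sum_mono)
    also have "\<dots> = (\<Sum>k<K. (1 / sqrt (fact k)) * (Y k / sqrt (fact k)))"
      by (intro sum.cong refl) (simp add: field_simps)
    finally have a: "cmod (\<Sum>k<K. t k) \<le> (\<Sum>k<K. (1 / sqrt (fact k)) * (Y k / sqrt (fact k)))" .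
    have "(cmod (\<Sum>k<K. t k))\<^sup>2 \<le> (\<Sum>k<K. (1 / sqrt (fact k)) * (Y k / sqrt (fact k)))\<^sup>2"
      using a by (intro power_mono) auto
    also have "\<dots> \<le> (\<Sum>k<K. (1 / sqrt (fact k))\<^sup>2) * (\<Sum>k<K. (Y k / sqrt (fact k))\<^sup>2)"
      by (rule Cauchy_Schwarz_ineq_sum)
    also have "\<dots> = (\<Sum>k<K. 1 / fact k) * (\<Sum>k<K. Y k ^ 2 / fact k)"
      by (simp add: power_divide)
    also have "\<dots> \<le> exp 1 * (\<Sum>k. Y k ^ 2 / fact k)"
    proof (rule mult_mono)
      show "(\<Sum>k<K. 1 / fact k) \<le> exp (1::real)"
        using sum_le_suminf[OF einv_summable, of "{..<K}"] einv_sum by simp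
      show "(\<Sum>k<K. Y k ^ 2 / fact k) \<le> (\<Sum>k. Y k ^ 2 / fact k)"
        by (rule sum_le_suminf[OF sumY]) auto
    qed (auto intro: sum_nonneg)
    finally show ?thesis .
  qed
  have lim: "(\<lambda>K. (cmod (\<Sum>k<K. t k))\<^sup>2) \<longlonglongrightarrow> (cmod (\<Sum>n=1..N. c n * (of_nat n) powr (-s)))\<^sup>2"
    using tsum unfolding sums_def by (intro tendsto_power tendsto_norm)
  show "(cmod (\<Sum>n=1..N. c n * (of_nat n) powr (-s)))\<^sup>2 \<le> exp 1 * (\<Sum>k. Y k ^ 2 / fact k)"
    using lim part by (intro LIMSEQ_le_const2) auto
qed

lemma norm_npowr: "cmod ((of_nat n :: complex) powr w) = real n powr (Re w)"
  by (subst norm_powr_real_powr) auto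

lemma msq:
  fixes c :: "nat \<Rightarrow> complex" and s' :: complex and Lp :: real
  assumes q: "q \<ge> 1" and S: "S \<subseteq> {psi. dirichlet_char q psi}" and N: "N \<ge> 2" and Lp: "Lp = ln (real N)"
    and cb: "\<And>n. cmod (c n) \<le> real (dd n)"
  shows "(\<Sum>psi\<in>S. \<Sum>m. (cmod (\<Sum>n=1..N. (c n * psi n) * of_real ((ln (real n) / Lp)^m) * (of_nat n) powr (-s')))^2 / fact m)
         \<le> exp 1 * (real (N + q) * (\<Sum>n=1..N. real (dd n)^2 * real n powr (-(2 * Re s'))))"
proof -
  have fS: "finite S" using dc_finite[OF q] S finite_subset by blast
  have Lp0: "Lp > 0" using N Lp by simp
  define Y where "Y psi m = cmod (\<Sum>n=1..N. (c n * psi n) * of_real ((ln (real n) / Lp)^m) * (of_nat n) powr (-s'))" for psi m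
  define M where "M = (\<Sum>n=1..N. real (dd n)^2 * real n powr (-(2 * Re s')))"
  have summ: "summable (\<lambda>m. Y psi m ^ 2 / fact m)" for psi
    unfolding Y_def using taylor(1)[OF N Lp, of s' s' "\<lambda>n. c n * psi n"] Lp0 by simp
  have per_m: "(\<Sum>psi\<in>S. Y psi m ^ 2) \<le> real (N + q) * M" for m
  proof -
    define a where "a n = c n * of_real ((ln (real n) / Lp)^m) * (of_nat n) powr (-s')" for n
    have "(\<Sum>psi\<in>S. Y psi m ^ 2) = (\<Sum>psi\<in>S. (cmod (\<Sum>n=1..N. a n * psi n))\<^sup>2)"
      unfolding Y_def a_def by (intro sum.cong refl arg_cong[where f="\<lambda>x. (cmod x)^2"]) (simp add: ac_simps)
    also have "\<dots> \<le> real (N + q) * (\<Sum>n=1..N. (cmod (a n))\<^sup>2)" by (rule ls_q[OF q S])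
    also have "\<dots> \<le> real (N + q) * M" unfolding M_def
    proof (intro mult_left_mono sum_mono)
      fix n assume n: "n \<in> {1..N}"
      have r: "0 \<le> (ln (real n) / Lp)^m" "(ln (real n) / Lp)^m \<le> 1"
      proof -
        have "ln (real n) \<le> Lp" "0 \<le> ln (real n)" using n Lp by auto
        then show "0 \<le> (ln (real n) / Lp)^m" "(ln (real n) / Lp)^m \<le> 1" using Lp0 by (auto intro!: power_le_one)
      qed
      have "cmod (a n) = cmod (c n) * \<bar>(ln (real n) / Lp)^m\<bar> * real n powr (- Re s')"
        unfolding a_def by (simp only: norm_mult norm_of_real norm_npowr) simp
      also have "\<dots> \<le> real (dd n) * 1 * real n powr (- Re s')"
        using r cb[of n] by (intro mult_right_mono mult_mono) auto
      finally have "cmod (a n) \<le> real (dd n) * real n powr (- Re s')" by simp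
      then have "(cmod (a n))\<^sup>2 \<le> (real (dd n) * real n powr (- Re s'))\<^sup>2" by (intro power_mono) auto
      also have "\<dots> = real (dd n)^2 * real n powr (-(2 * Re s'))"
        by (simp add: power_mult_distrib power2_eq_square powr_add[symmetric])
      finally show "(cmod (a n))\<^sup>2 \<le> real (dd n)^2 * real n powr (-(2 * Re s'))" .
    qed simp
    finally show ?thesis .
  qed
  have "(\<Sum>psi\<in>S. \<Sum>m. Y psi m ^ 2 / fact m) = (\<Sum>m. \<Sum>psi\<in>S. Y psi m ^ 2 / fact m)"
    by (rule suminf_sum[symmetric]) (rule summ)
  also have "\<dots> \<le> (\<Sum>m. (real (N + q) * M) * (1 / fact m))"
  proof (rule suminf_le)
    fix m
    have "(\<Sum>psi\<in>S. Y psi m ^ 2 / fact m) = (\<Sum>psi\<in>S. Y psi m ^ 2) / fact m" by (simp add: sum_divide_distrib)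
    also have "\<dots> \<le> (real (N + q) * M) / fact m" using per_m[of m] by (intro divide_right_mono) auto
    finally show "(\<Sum>psi\<in>S. Y psi m ^ 2 / fact m) \<le> (real (N + q) * M) * (1 / fact m)" by simp
  next
    show "summable (\<lambda>m. \<Sum>psi\<in>S. Y psi m ^ 2 / fact m)" by (intro summable_sum summ)
    show "summable (\<lambda>m. (real (N + q) * M) * (1 / fact m))" by (intro summable_mult einv_summable)
  qed
  also have "\<dots> = exp 1 * (real (N + q) * M)" using suminf_mult[OF einv_summable, of "real (N + q) * M"] einv_sum by simp
  finally show ?thesis unfolding Y_def M_def .
qed

lemma grid_pt:
  fixes a x h R :: real
  assumes h: "h > 0" and ax: "a \<le> x" and xR: "x < a + R"
  shows "nat \<lfloor>(x-a)/h\<rfloor> \<le> nat \<lceil>R/h\<rceil>" "a + real (nat \<lfloor>(x-a)/h\<rfloor>) * h \<le> x"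
    "x < a + real (nat \<lfloor>(x-a)/h\<rfloor>) * h + h"
proof -
  define y where "y = (x-a)/h"
  have y0: "y \<ge> 0" using h ax unfolding y_def by simp
  have ry: "real (nat \<lfloor>y\<rfloor>) = of_int \<lfloor>y\<rfloor>" using y0 by simp
  have yR: "y < R/h" using xR h unfolding y_def by (simp add: divide_strict_right_mono)
  have "\<lfloor>y\<rfloor> \<le> \<lceil>R/h\<rceil>" using yR by (meson floor_le_ceiling floor_mono less_imp_le order.trans le_of_int_ceiling floor_le_iff)
  then show "nat \<lfloor>(x-a)/h\<rfloor> \<le> nat \<lceil>R/h\<rceil>" unfolding y_def by simp
  have xe: "x = a + y * h" using h unfolding y_def by simp
  show "a + real (nat \<lfloor>(x-a)/h\<rfloor>) * h \<le> x"
    using ry xe h unfolding y_def[symmetric] by (simp add: mult_right_mono)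
  have "y < of_int \<lfloor>y\<rfloor> + 1" by linarith
  then have "y * h < (of_int \<lfloor>y\<rfloor> + 1) * h" using h by simp
  then show "x < a + real (nat \<lfloor>(x-a)/h\<rfloor>) * h + h"
    using ry xe unfolding y_def[symmetric] by (simp add: algebra_simps)
qed

lemma ybound:
  fixes Lp :: real assumes Lp: "Lp > 0"
  shows "1 / max ((real i - 20) / Lp) (1 / Lp) \<le> 22 * Lp / (real i + 1)"
proof -
  have m: "max ((real i - 20) / Lp) (1 / Lp) \<ge> (real i + 1) / (22 * Lp)"
  proof (cases "i \<ge> 21")
    case True
    then have "(real i + 1) / (22 * Lp) \<le> (real i - 20) / Lp" using Lp by (simp add: field_simps)
    then show ?thesis by simp
  next
    case False
    then have "(real i + 1) / (22 * Lp) \<le> 1 / Lp" using Lp by (simp add: field_simps)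
    then show ?thesis by simp
  qed
  have p: "(real i + 1) / (22 * Lp) > 0" using Lp by simp
  have "1 / max ((real i - 20) / Lp) (1 / Lp) \<le> 1 / ((real i + 1) / (22 * Lp))"
    using le_imp_inverse_le[OF m p] by (simp only: inverse_eq_divide)
  also have "\<dots> = 22 * Lp / (real i + 1)" by simp
  finally show ?thesis .
qed

lemma Msum:
  fixes Lp :: real
  assumes N: "N \<ge> 3" and Lp: "Lp = ln (real N)"
  shows "(\<Sum>i=0..I. \<Sum>n=1..N. real (dd n)^2 * real n powr (-(1 + (real i - 20)/Lp)))
         \<le> 16 * exp 84 * (real (I+1) + 2 * 22^4 * Lp^4)"
proof -
  have Lp0: "Lp > 0" using N Lp by simp
  have tm: "(\<Sum>n=1..N. real (dd n)^2 * real n powr (-(1 + (real i - 20)/Lp)))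
        \<le> 16 * exp 84 * (1 + 22^4 * Lp^4 * (1 / (real i + 1)^2))" for i
  proof -
    define v where "v = (real i - 20)/Lp"
    define y where "y = 1 / max v (1/Lp)"
    have vge: "v \<ge> -20/Lp" unfolding v_def using Lp0 divide_right_mono[of "-20" "real i - 20" Lp] by simp
    have "max v (1/Lp) \<ge> 1/Lp" by simp
    then have "max v (1/Lp) > 0" using Lp0 by (meson divide_pos_pos order_less_le_trans zero_less_one)
    then have y0: "y \<ge> 0" unfolding y_def by simp
    have yle: "y \<le> 22 * Lp / (real i + 1)" unfolding y_def v_def by (rule ybound[OF Lp0])
    define H where "H = (\<Sum>m=1..N. real m powr (-(1+v)))"
    have H0: "H \<ge> 0" unfolding H_def by (simp add: sum_nonneg)
    have Hle: "H \<le> exp 21 * (1 + y)" unfolding H_def y_def by (rule H_bound[OF N Lp vge])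
    have "(\<Sum>n=1..N. real (dd n)^2 * real n powr (-(1 + (real i - 20)/Lp))) \<le> H ^ 4"
      unfolding H_def v_def by (rule M_bound)
    also have "\<dots> \<le> (exp 21 * (1 + y)) ^ 4" using H0 Hle by (intro power_mono) auto
    also have "\<dots> = exp 84 * (1 + y)^4"
    proof -
      have "exp (21::real) ^ 4 = exp (real 4 * 21)" by (rule exp_of_nat_mult[symmetric])
      then show ?thesis by (simp add: power_mult_distrib)
    qed
    also have "\<dots> \<le> exp 84 * (16 * (1 + y^4))" using four_pow[OF y0] by (intro mult_left_mono) auto
    also have "y^4 \<le> 22^4 * Lp^4 * (1 / (real i + 1)^2)"
    proof -
      have "y^4 \<le> (22 * Lp / (real i + 1))^4" using y0 yle by (intro power_mono) auto
      also have "\<dots> = 22^4 * Lp^4 * (1 / (real i + 1)^4)" by (simp add: power_divide power_mult_distrib)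
      also have "\<dots> \<le> 22^4 * Lp^4 * (1 / (real i + 1)^2)"
      proof (intro mult_left_mono divide_left_mono)
        show "(real i + 1)^2 \<le> (real i + 1)^4" by (rule power_increasing) auto
      qed auto
      finally show ?thesis .
    qed
    then have "exp 84 * (16 * (1 + y^4)) \<le> exp 84 * (16 * (1 + 22^4 * Lp^4 * (1 / (real i + 1)^2)))"
      by (intro mult_left_mono) auto
    also have "\<dots> = 16 * exp 84 * (1 + 22^4 * Lp^4 * (1 / (real i + 1)^2))" by (simp only: ac_simps)
    finally show ?thesis .
  qed
  have "(\<Sum>i=0..I. \<Sum>n=1..N. real (dd n)^2 * real n powr (-(1 + (real i - 20)/Lp)))
        \<le> (\<Sum>i=0..I. 16 * exp 84 * (1 + 22^4 * Lp^4 * (1 / (real i + 1)^2)))"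
    by (rule sum_mono) (rule tm)
  also have "\<dots> = 16 * exp 84 * (\<Sum>i=0..I. (1 + 22^4 * Lp^4 * (1 / (real i + 1)^2)))"
    by (rule sum_distrib_left[symmetric])
  also have "16 * exp 84 * (\<Sum>i=0..I. (1 + 22^4 * Lp^4 * (1 / (real i + 1)^2))) = 16 * exp 84 * (real (I+1) + 22^4 * Lp^4 * (\<Sum>i=0..I. 1 / (real i + 1)^2))"
    by (simp only: sum.distrib sum_distrib_left[symmetric]) simp
  also have "\<dots> \<le> 16 * exp 84 * (real (I+1) + 22^4 * Lp^4 * 2)"
  proof -
    have "(\<Sum>i=0..I. 1 / (real i + 1)^2) = (\<Sum>i<I+1. 1 / (real i + 1)^2)"
      by (rule sum.cong) auto
    also have "\<dots> \<le> 2 - 1 / real (max (I+1) 1)" by (rule inv_sq_sum)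
    also have "\<dots> \<le> 2" by simp
    finally have "(\<Sum>i=0..I. 1 / (real i + 1)^2) \<le> 2" .
    then show ?thesis by (intro mult_left_mono add_left_mono) auto
  qed
  finally show ?thesis by simp
qed

lemma nat_ceil_le: fixes x :: real assumes "x \<ge> 0" shows "real (nat \<lceil>x\<rceil>) \<le> x + 1"
  using assms by linarith

lemma sq_sum_le: fixes a b :: real shows "(a + b)\<^sup>2 \<le> 2 * a\<^sup>2 + 2 * b\<^sup>2"
proof -
  have "0 \<le> (a - b)\<^sup>2" by simp
  then show ?thesis by (simp add: power2_eq_square algebra_simps)
qed

lemma e_arith: "2 * exp 1 * (2 * exp 1 * x * c) = 4 * exp 2 * c * (x::real)"
proof -
  have e2: "exp (2::real) = exp 1 * exp 1" by (simp add: mult_exp_exp)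
  show ?thesis unfolding e2 by (simp add: algebra_simps del: mult_exp_exp)
qed

definition CC :: real where "CC = 4 * exp 2 * 9 * 22 * 15625 * (16 * exp 84 * (24 + 2 * 22^4))"

lemma qsum:
  fixes Q :: real and N :: nat
  assumes Q1: "Q \<ge> 1" and NQ: "real N \<le> Q" and QS: "QS \<subseteq> {q. real q < 2 * Q}"
  shows "finite QS" "(\<Sum>q\<in>QS. real (N + q)) \<le> 9 * Q^2"
proof -
  have sub: "QS \<subseteq> {..< nat \<lceil>2*Q\<rceil>}" using QS by (auto simp: less_ceiling_iff zless_nat_eq_int_zless)
  then show fin: "finite QS" by (rule finite_subset) simp
  have "card QS \<le> card {..< nat \<lceil>2*Q\<rceil>}" using sub by (intro card_mono) auto
  then have "real (card QS) \<le> real (nat \<lceil>2*Q\<rceil>)" by simp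
  then have cQ: "real (card QS) \<le> 2 * Q + 1" using Q1 nat_ceil_le[of "2*Q"] by linarith
  have "(\<Sum>q\<in>QS. real (N + q)) \<le> (\<Sum>q\<in>QS. 3 * Q)"
  proof (rule sum_mono)
    fix q assume "q \<in> QS" then have "real q < 2 * Q" using QS by auto
    then show "real (N + q) \<le> 3 * Q" using NQ by simp
  qed
  also have "\<dots> = real (card QS) * (3 * Q)" by simp
  also have "\<dots> \<le> (2 * Q + 1) * (3 * Q)" using cQ Q1 by (intro mult_right_mono) auto
  also have "\<dots> \<le> 9 * Q^2" using Q1 by (simp add: power2_eq_square algebra_simps)
  finally show "(\<Sum>q\<in>QS. real (N + q)) \<le> 9 * Q^2" .
qed

lemma core:
  fixes D :: nat and chi :: "nat \<Rightarrow> complex"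
  assumes Lbig: "LL D \<ge> 5" and dc: "dirichlet_char D chi"
  defines "E \<equiv> {psi \<in> PsiSet D chi.
                \<not> ((SUP s\<in>Omega1 D. cmod (Fsum D chi s psi) + cmod (Gsum D chi s psi))
                     < LL D ^ 3 * ln (LL D))}"
  shows "finite E \<and> real (card E) \<le> CC * (ln (LL D)) powi (-2) * QQ D ^ 2"
proof -
  define L where "L = LL D"
  define Q where "Q = QQ D"
  define N where "N = D^5"
  define Lp where "Lp = ln (real N)"
  define h where "h = 1 / (2 * Lp)"
  define sa where "sa = 1/2 - 10/Lp"
  define ta where "ta = real D - 1 - 4 * Lp"
  define I where "I = nat \<lceil>(1 + 10/Lp) / h\<rceil>"
  define K where "K = nat \<lceil>(2 + 8*Lp) / h\<rceil>"
  define T where "T = L ^ 3 * ln L"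
  define sg where "sg i = sa + real i * h" for i :: nat
  define tg where "tg k = ta + real k * h" for k :: nat
  define pt where "pt i k = Complex (sg i) (tg k)" for i k
  define YF where "YF psi i k m = cmod (\<Sum>n=1..N. (nu chi n * psi n) * of_real ((ln (real n) / Lp)^m) * (of_nat n) powr (-(pt i k)))"
    for psi :: "nat \<Rightarrow> complex" and i k m
  define YG where "YG psi i k m = cmod (\<Sum>n=1..N. (upsilon chi n * psi n) * of_real ((ln (real n) / Lp)^m) * (of_nat n) powr (-(pt i k)))"
    for psi :: "nat \<Rightarrow> complex" and i k m
  define V where "V psi i k = (\<Sum>m. YF psi i k m ^ 2 / fact m) + (\<Sum>m. YG psi i k m ^ 2 / fact m)" for psi i k
  define W where "W psi = (\<Sum>(i,k)\<in>{0..I} \<times> {0..K}. V psi i k)" for psi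
  define M where "M i = (\<Sum>n=1..N. real (dd n)^2 * real n powr (-(1 + (real i - 20)/Lp)))" for i :: nat
  define S where "S q = {psi. dirichlet_char q psi}" for q
  have L5: "L \<ge> 5" using Lbig L_def by simp
  have D0: "D > 0"
  proof (rule ccontr)
    assume "\<not> D > 0" then have "D = 0" by simp
    then show False using L5 unfolding L_def LL_def by simp
  qed
  have DL: "real D = exp L" using D0 unfolding L_def LL_def by simp
  have D3: "real D \<ge> 3"
  proof -
    have "exp (5::real) \<ge> 1 + 5" by (rule exp_ge_add_one_self)
    moreover have "exp (5::real) \<le> exp L" using L5 by simp
    ultimately have "exp L \<ge> 6" by linarith
    then show ?thesis using DL by simp
  qed
  have N3: "N \<ge> 3"
  proof -
    have "D \<ge> 3" using D3 by simp
    then have "D^1 \<le> D^5" by (intro power_increasing) auto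
    then show ?thesis unfolding N_def using \<open>D \<ge> 3\<close> by simp
  qed
  have LpL: "Lp = 5 * L" unfolding Lp_def N_def L_def LL_def using D0 by (simp add: ln_realpow)
  have Lp1: "Lp \<ge> 1" using LpL L5 by simp
  have Lp0: "Lp > 0" using Lp1 by simp
  have h0: "h > 0" unfolding h_def using Lp0 by simp
  have lnL: "ln L > 0" using L5 by simp
  have T0: "T > 0" unfolding T_def using L5 lnL by simp
  have Q1: "Q \<ge> 1" unfolding Q_def QQ_def by simp
  have NQ: "real N \<le> Q"
  proof -
    have "real N = real D ^ 5" unfolding N_def by simp
    also have "\<dots> = exp (real 5 * L)" unfolding DL by (rule exp_of_nat_mult[symmetric])
    also have "\<dots> \<le> exp (L^2)"
    proof -
      have "real 5 * L \<le> L * L" using L5 by (intro mult_right_mono) auto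
      then show ?thesis by (simp add: power2_eq_square)
    qed
    finally show ?thesis unfolding Q_def QQ_def L_def .
  qed

  have N2: "N \<ge> 2" using N3 by simp
  have summF: "summable (\<lambda>m. YF psi i k m ^ 2 / fact m)" for psi i k
    unfolding YF_def using taylor(1)[OF N2 Lp_def, of "pt i k" "pt i k" "\<lambda>n. nu chi n * psi n"] by simp
  have summG: "summable (\<lambda>m. YG psi i k m ^ 2 / fact m)" for psi i k
    unfolding YG_def using taylor(1)[OF N2 Lp_def, of "pt i k" "pt i k" "\<lambda>n. upsilon chi n * psi n"] by simp
  have V0: "V psi i k \<ge> 0" for psi i k
    unfolding V_def using summF summG by (intro add_nonneg_nonneg suminf_nonneg) auto
  have W0: "W psi \<ge> 0" for psi unfolding W_def using V0 by (intro sum_nonneg) (auto simp: case_prod_beta)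
  have sqa: "sqrt (alpha D) = 1 / L" using L5 unfolding alpha_def L_def by (simp add: real_sqrt_divide)
  have pw: "(cmod (Fsum D chi s psi) + cmod (Gsum D chi s psi))\<^sup>2 \<le> 2 * exp 1 * W psi"
    if s: "s \<in> Omega1 D" for s psi
  proof -
    have o1: "- 2 * (1/L) < Re s - 1/2" and o2: "Re s - 1/2 < 1" and o3: "\<bar>Im s - real D\<bar> < 1 + 20 * L"
      using s sqa unfolding Omega1_def s0_def L_def by auto
    have r1: "sa \<le> Re s" using o1 LpL L5 unfolding sa_def by (simp add: field_simps)
    have r2: "Re s < sa + (1 + 10/Lp)" using o2 unfolding sa_def by simp
    have i1: "ta \<le> Im s" using o3 LpL unfolding ta_def by linarith
    have i2: "Im s < ta + (2 + 8*Lp)" using o3 LpL unfolding ta_def by linarith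
    define i where "i = nat \<lfloor>(Re s - sa)/h\<rfloor>"
    define k where "k = nat \<lfloor>(Im s - ta)/h\<rfloor>"
    have iI: "i \<le> I" and gi1: "sg i \<le> Re s" and gi2: "Re s < sg i + h"
      using grid_pt[OF h0 r1 r2] unfolding i_def[symmetric] I_def sg_def by auto
    have kK: "k \<le> K" and gk1: "tg k \<le> Im s" and gk2: "Im s < tg k + h"
      using grid_pt[OF h0 i1 i2] unfolding k_def[symmetric] K_def tg_def by auto
    have "cmod (s - pt i k) \<le> \<bar>Re (s - pt i k)\<bar> + \<bar>Im (s - pt i k)\<bar>" by (rule cmod_le)
    also have "\<dots> \<le> h + h" unfolding pt_def using gi1 gi2 gk1 gk2 by simp
    finally have "cmod (s - pt i k) \<le> 2 * h" by simp
    then have close: "cmod (s - pt i k) * Lp \<le> 1" using Lp0 unfolding h_def by (simp add: field_simps)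
    have tF: "(cmod (Fsum D chi s psi))\<^sup>2 \<le> exp 1 * (\<Sum>m. YF psi i k m ^ 2 / fact m)"
      unfolding Fsum_def YF_def N_def[symmetric]
      using taylor(2)[OF N2 Lp_def close, of "\<lambda>n. nu chi n * psi n"] by simp
    have tG: "(cmod (Gsum D chi s psi))\<^sup>2 \<le> exp 1 * (\<Sum>m. YG psi i k m ^ 2 / fact m)"
      unfolding Gsum_def YG_def N_def[symmetric]
      using taylor(2)[OF N2 Lp_def close, of "\<lambda>n. upsilon chi n * psi n"] by simp
    have VW: "V psi i k \<le> W psi"
    proof -
      have "V psi i k = (\<lambda>(i,k). V psi i k) (i, k)" by simp
      also have "\<dots> \<le> (\<Sum>(i,k)\<in>{0..I} \<times> {0..K}. V psi i k)"
        using iI kK V0 by (intro member_le_sum) (auto simp: case_prod_beta)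
      finally show ?thesis unfolding W_def .
    qed
    have "(cmod (Fsum D chi s psi) + cmod (Gsum D chi s psi))\<^sup>2 \<le>
          2 * (cmod (Fsum D chi s psi))\<^sup>2 + 2 * (cmod (Gsum D chi s psi))\<^sup>2" by (rule sq_sum_le)
    also have "\<dots> \<le> 2 * exp 1 * V psi i k" using tF tG unfolding V_def by (simp add: algebra_simps)
    also have "\<dots> \<le> 2 * exp 1 * W psi" using VW by simp
    finally show ?thesis .
  qed
  have s0in: "s0 D \<in> Omega1 D" using sqa L5 unfolding Omega1_def L_def[symmetric] by simp
  have Tsq: "T^2 \<le> 2 * exp 1 * W psi" if "psi \<in> E" for psi
  proof -
    have "(SUP s\<in>Omega1 D. cmod (Fsum D chi s psi) + cmod (Gsum D chi s psi)) \<le> sqrt (2 * exp 1 * W psi)"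
      using s0in by (intro cSUP_least real_le_rsqrt pw) auto
    moreover have "T \<le> (SUP s\<in>Omega1 D. cmod (Fsum D chi s psi) + cmod (Gsum D chi s psi))"
      using that unfolding E_def T_def L_def by auto
    ultimately have "T \<le> sqrt (2 * exp 1 * W psi)" by linarith
    then have "T^2 \<le> (sqrt (2 * exp 1 * W psi))^2" using T0 by (intro power_mono) auto
    also have "\<dots> = 2 * exp 1 * W psi" using W0[of psi] by simp
    finally show ?thesis .
  qed

  have QSsub: "QSet D \<subseteq> {q. real q < 2 * Q}" unfolding QSet_def Q_def by auto
  have finQ: "finite (QSet D)" by (rule qsum(1)[OF Q1 NQ QSsub])
  have q1: "q \<ge> 1" if "q \<in> QSet D" for q
  proof -
    have "real q > Q" using that unfolding QSet_def Q_def by auto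
    then show ?thesis using Q1 by simp
  qed
  have finS: "finite (S q)" if "q \<in> QSet D" for q unfolding S_def using dc_finite[OF q1[OF that]] .
  have finSig: "finite (Sigma (QSet D) S)" using finQ finS by (intro finite_SigmaI) auto
  have Esub: "E \<subseteq> snd ` Sigma (QSet D) S"
  proof
    fix psi assume "psi \<in> E"
    then have "psi \<in> PsiSet D chi" unfolding E_def by simp
    then obtain q where "q \<in> QSet D" "primitive_char q psi" unfolding PsiSet_def by auto
    then have "(q, psi) \<in> Sigma (QSet D) S" unfolding S_def primitive_char_def by auto
    then show "psi \<in> snd ` Sigma (QSet D) S" by force
  qed
  have finE: "finite E" using Esub finSig by (meson finite_imageI finite_subset)
  have perq: "(\<Sum>psi\<in>S q. W psi) \<le> 2 * exp 1 * real (N + q) * (real (K+1) * (\<Sum>i=0..I. M i))"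
    if qQ: "q \<in> QSet D" for q
  proof -
    have Ssub: "S q \<subseteq> {psi. dirichlet_char q psi}" unfolding S_def by simp
    have two: "2 * Re (pt i k) = 1 + (real i - 20)/Lp" for i k
      unfolding pt_def sg_def sa_def h_def using Lp0 by (simp add: field_simps)
    have Vb: "(\<Sum>psi\<in>S q. V psi i k) \<le> 2 * exp 1 * real (N + q) * M i" for i k
    proof -
      have a: "(\<Sum>psi\<in>S q. \<Sum>m. YF psi i k m ^ 2 / fact m) \<le> exp 1 * (real (N + q) * M i)"
        using msq[OF q1[OF qQ] Ssub N2 Lp_def nu_bound[OF dc], where s'="pt i k"]
        unfolding YF_def M_def two .
      have b: "(\<Sum>psi\<in>S q. \<Sum>m. YG psi i k m ^ 2 / fact m) \<le> exp 1 * (real (N + q) * M i)"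
        using msq[OF q1[OF qQ] Ssub N2 Lp_def upsilon_bound[OF dc], where s'="pt i k"]
        unfolding YG_def M_def two .
      have "(\<Sum>psi\<in>S q. V psi i k) = (\<Sum>psi\<in>S q. \<Sum>m. YF psi i k m ^ 2 / fact m) + (\<Sum>psi\<in>S q. \<Sum>m. YG psi i k m ^ 2 / fact m)"
        unfolding V_def by (rule sum.distrib)
      also have "\<dots> \<le> 2 * exp 1 * real (N + q) * M i" using a b by simp
      finally show ?thesis .
    qed
    have "(\<Sum>psi\<in>S q. W psi) = (\<Sum>(i,k)\<in>{0..I} \<times> {0..K}. \<Sum>psi\<in>S q. V psi i k)"
      unfolding W_def by (subst sum.swap) (simp add: case_prod_beta)
    also have "\<dots> \<le> (\<Sum>(i,k)\<in>{0..I} \<times> {0..K}. 2 * exp 1 * real (N + q) * M i)"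
      by (rule sum_mono) (simp only: case_prod_beta Vb)
    also have "\<dots> = (\<Sum>i=0..I. \<Sum>k=0..K. 2 * exp 1 * real (N + q) * M i)"
      by (simp only: sum.cartesian_product)
    also have "\<dots> = 2 * exp 1 * real (N + q) * (real (K+1) * (\<Sum>i=0..I. M i))"
      by (simp add: sum_distrib_left mult.assoc mult.left_commute)
    finally show ?thesis .
  qed
  have "real (card E) * T^2 = (\<Sum>psi\<in>E. T^2)" by simp
  also have "\<dots> \<le> (\<Sum>psi\<in>E. 2 * exp 1 * W psi)" using Tsq by (rule sum_mono)
  also have "\<dots> \<le> (\<Sum>psi\<in>snd ` Sigma (QSet D) S. 2 * exp 1 * W psi)"
    using Esub finSig W0 by (intro sum_mono2) auto
  also have "\<dots> \<le> (\<Sum>x\<in>Sigma (QSet D) S. 2 * exp 1 * W (snd x))"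
    using sum_image_le[OF finSig, of "\<lambda>psi. 2 * exp 1 * W psi" snd] W0 by (simp add: comp_def)
  also have "\<dots> = (\<Sum>q\<in>QSet D. \<Sum>psi\<in>S q. 2 * exp 1 * W psi)"
    using finQ finS by (subst sum.Sigma) (auto simp: case_prod_beta)
  also have "\<dots> \<le> (\<Sum>q\<in>QSet D. 2 * exp 1 * (2 * exp 1 * real (N + q) * (real (K+1) * (\<Sum>i=0..I. M i))))"
  proof (rule sum_mono)
    fix q assume qQ: "q \<in> QSet D"
    have "(\<Sum>psi\<in>S q. 2 * exp 1 * W psi) = 2 * exp 1 * (\<Sum>psi\<in>S q. W psi)" by (simp add: sum_distrib_left)
    also have "\<dots> \<le> 2 * exp 1 * (2 * exp 1 * real (N + q) * (real (K+1) * (\<Sum>i=0..I. M i)))"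
      using perq[OF qQ] by (intro mult_left_mono) auto
    finally show "(\<Sum>psi\<in>S q. 2 * exp 1 * W psi) \<le> 2 * exp 1 * (2 * exp 1 * real (N + q) * (real (K+1) * (\<Sum>i=0..I. M i)))" .
  qed
  also have "\<dots> = (4 * exp 2 * (real (K+1) * (\<Sum>i=0..I. M i))) * (\<Sum>q\<in>QSet D. real (N + q))"
  proof -
    have "(\<Sum>q\<in>QSet D. 2 * exp 1 * (2 * exp 1 * real (N + q) * (real (K+1) * (\<Sum>i=0..I. M i))))
        = (\<Sum>q\<in>QSet D. (4 * exp 2 * (real (K+1) * (\<Sum>i=0..I. M i))) * real (N + q))"
      by (rule sum.cong[OF refl]) (rule e_arith)
    also have "\<dots> = (4 * exp 2 * (real (K+1) * (\<Sum>i=0..I. M i))) * (\<Sum>q\<in>QSet D. real (N + q))"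
      by (rule sum_distrib_left[symmetric])
    finally show ?thesis .
  qed
  finally have cnt: "real (card E) * T^2 \<le> (4 * exp 2 * (real (K+1) * (\<Sum>i=0..I. M i))) * (\<Sum>q\<in>QSet D. real (N + q))" .

  have I1: "real (I+1) \<le> 24 * Lp^4"
  proof -
    have "(1 + 10/Lp) / h = 2 * Lp + 20" unfolding h_def using Lp0 by (simp add: field_simps)
    then have "real I \<le> 2 * Lp + 21" unfolding I_def using nat_ceil_le[of "(1 + 10/Lp) / h"] Lp0 by simp
    moreover have "Lp^1 \<le> Lp^4" using Lp1 by (intro power_increasing) auto
    ultimately show ?thesis using Lp1 by simp
  qed
  have K1: "real (K+1) \<le> 22 * Lp^2"
  proof -
    have "(2 + 8*Lp) / h = 4 * Lp + 16 * Lp^2" unfolding h_def using Lp0 by (simp add: field_simps power2_eq_square)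
    then have "real K \<le> 4 * Lp + 16 * Lp^2 + 1" unfolding K_def using nat_ceil_le[of "(2 + 8*Lp) / h"] Lp0 by simp
    moreover have "Lp^1 \<le> Lp^2" using Lp1 by (intro power_increasing) auto
    moreover have "1 \<le> Lp^2" using Lp1 by simp
    ultimately show ?thesis by simp
  qed
  define X where "X = 16 * exp 84 * (24 + 2 * 22^4::real)"
  have M0: "(\<Sum>i=0..I. M i) \<ge> 0" unfolding M_def by (intro sum_nonneg) auto
  have SM: "(\<Sum>i=0..I. M i) \<le> X * Lp^4"
  proof -
    have "(\<Sum>i=0..I. M i) \<le> 16 * exp 84 * (real (I+1) + 2 * 22^4 * Lp^4)"
      unfolding M_def by (rule Msum[OF N3 Lp_def])
    also have "\<dots> \<le> 16 * exp 84 * (24 * Lp^4 + 2 * 22^4 * Lp^4)" using I1 by (intro mult_left_mono) auto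
    also have "\<dots> = X * Lp^4" unfolding X_def by (simp add: algebra_simps)
    finally show ?thesis .
  qed
  have SQ: "(\<Sum>q\<in>QSet D. real (N + q)) \<le> 9 * Q^2" by (rule qsum(2)[OF Q1 NQ QSsub])
  have SQ0: "(\<Sum>q\<in>QSet D. real (N + q)) \<ge> 0" by (intro sum_nonneg) auto
  have "real (card E) * T^2 \<le> (4 * exp 2 * (real (K+1) * (\<Sum>i=0..I. M i))) * (\<Sum>q\<in>QSet D. real (N + q))"
    by (rule cnt)
  also have "\<dots> \<le> (4 * exp 2 * (22 * Lp^2 * (X * Lp^4))) * (9 * Q^2)"
  proof (intro mult_mono mult_left_mono)
    show "real (K+1) \<le> 22 * Lp^2" by (rule K1)
  qed (use SM SQ M0 SQ0 in auto)
  also have "\<dots> = CC * L^6 * Q^2" unfolding CC_def X_def LpL by (simp add: power_mult_distrib algebra_simps)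
  finally have c1: "real (card E) * T^2 \<le> CC * L^6 * Q^2" .
  have T2: "T^2 = L^6 * (ln L)^2" unfolding T_def by (simp add: power_mult_distrib power_mult[symmetric])
  have L6: "L^6 > 0" using L5 by simp
  have "L^6 * (real (card E) * (ln L)^2) \<le> L^6 * (CC * Q^2)" using c1 T2 by (simp add: algebra_simps)
  then have c2: "real (card E) * (ln L)^2 \<le> CC * Q^2" using L6 by simp
  have lnL2: "(ln L)^2 > 0" using lnL by simp
  have "real (card E) \<le> CC * Q^2 / (ln L)^2" using c2 lnL2 by (simp add: pos_le_divide_eq)
  also have "CC * Q^2 / (ln L)^2 = CC * (ln L) powi (-2) * Q^2"
    by (simp add: power_int_minus divide_inverse)
  finally show ?thesis using finE unfolding L_def Q_def by simp
qed

theorem lemma2p4: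
  "\<exists>C D0. \<forall>(D::nat) chi. real D > D0 \<and> primitive_char D chi \<and> real_char chi \<longrightarrow>
     (let E = {psi \<in> PsiSet D chi.
                \<not> ((SUP s\<in>Omega1 D. cmod (Fsum D chi s psi) + cmod (Gsum D chi s psi))
                     < LL D ^ 3 * ln (LL D))}
      in finite E \<and> real (card E) \<le> C * (ln (LL D)) powi (-2) * QQ D ^ 2)"
proof -
  have "\<forall>(D::nat) chi. real D > exp 5 \<and> primitive_char D chi \<and> real_char chi \<longrightarrow>
     (let E = {psi \<in> PsiSet D chi.
                \<not> ((SUP s\<in>Omega1 D. cmod (Fsum D chi s psi) + cmod (Gsum D chi s psi))
                     < LL D ^ 3 * ln (LL D))}
      in finite E \<and> real (card E) \<le> CC * (ln (LL D)) powi (-2) * QQ D ^ 2)"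
  proof (intro allI impI)
    fix D :: nat and chi :: "nat \<Rightarrow> complex"
    assume h: "real D > exp 5 \<and> primitive_char D chi \<and> real_char chi"
    have D0: "real D > 0" using h by (meson exp_gt_zero order.strict_trans)
    have "ln (exp 5) < ln (real D)" using h D0 by (subst ln_less_cancel_iff) auto
    then have L5: "LL D \<ge> 5" unfolding LL_def by simp
    have dc: "dirichlet_char D chi" using h unfolding primitive_char_def by simp
    show "let E = {psi \<in> PsiSet D chi.
                \<not> ((SUP s\<in>Omega1 D. cmod (Fsum D chi s psi) + cmod (Gsum D chi s psi))
                     < LL D ^ 3 * ln (LL D))}
      in finite E \<and> real (card E) \<le> CC * (ln (LL D)) powi (-2) * QQ D ^ 2"
      using core[OF L5 dc] by (simp add: Let_def)
  qed
  then show ?thesis by blast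
qed

end
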